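(* Let $(X,d_X)$ be a discrete countable metric space. Then $X$ is bounded (has finite diameter) if and only if the uniform Roe algebra $C^*_u(X)$ is monotone complete.
   Context: $H_X=\ell^2(X)$ with orthonormal basis $\{\delta_x\}$; a bounded operator $T$ on $H_X$ has propagation at most $L$ if $d_X(x,y)\ge L$ implies $(\delta_x,T\delta_y)=0$. $C^*_u(X)$ is the norm closure in $\mathbb B(H_X)$ of the bounded operators of finite propagation. A $C^*$-algebra $A$ is monotone complete if every bounded increasing net of self-adjoint elements of $A$ has a least upper bound in $A$ (with respect to the order of self-adjoint elements of $A$). *)

theory Defs
  imports "HOL-Analysis.Analysis"
begin

text \<open>Vectors of H_X = l2(X) are represented as functions X \<Rightarrow> complex that are
  square-summable; (possibly nonlinear-looking) maps on all functions are used as operators,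
  but all conditions only look at their behaviour on l2(X).\<close>

type_synonym 'a vec = "'a \<Rightarrow> complex"
type_synonym 'a op = "'a vec \<Rightarrow> 'a vec"

definition ell2 :: "'a vec set" where
  "ell2 = {f. (\<lambda>x. (cmod (f x))^2) summable_on UNIV}"

definition l2norm :: "'a vec \<Rightarrow> real" where
  "l2norm f = sqrt (\<Sum>\<^sub>\<infinity>x. (cmod (f x))^2)"

definition l2inner :: "'a vec \<Rightarrow> 'a vec \<Rightarrow> complex" where
  "l2inner f g = (\<Sum>\<^sub>\<infinity>x. cnj (f x) * g x)"

definition delta :: "'a \<Rightarrow> 'a vec" where
  "delta x = (\<lambda>y. if y = x then 1 else 0)"

definition bounded_op :: "'a op \<Rightarrow> bool" where
  "bounded_op T \<longleftrightarrow>
     (\<forall>f\<in>ell2. T f \<in> ell2) \<and>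
     (\<forall>f\<in>ell2. \<forall>g\<in>ell2. \<forall>a b. T (\<lambda>x. a * f x + b * g x) = (\<lambda>x. a * T f x + b * T g x)) \<and>
     (\<exists>C. \<forall>f\<in>ell2. l2norm (T f) \<le> C * l2norm f)"

definition propagation_le :: "real \<Rightarrow> ('a::metric_space) op \<Rightarrow> bool" where
  "propagation_le L T \<longleftrightarrow>
     (\<forall>x y. dist x y \<ge> L \<longrightarrow> l2inner (delta x) (T (delta y)) = 0)"

definition finite_propagation :: "('a::metric_space) op \<Rightarrow> bool" where
  "finite_propagation T \<longleftrightarrow> bounded_op T \<and> (\<exists>L. propagation_le L T)"

definition uniform_roe :: "('a::metric_space) op set" where
  "uniform_roe = {T. bounded_op T \<and>
     (\<forall>\<epsilon>>0. \<exists>S. finite_propagation S \<and>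
        (\<forall>f\<in>ell2. l2norm (\<lambda>x. T f x - S f x) \<le> \<epsilon> * l2norm f))}"

definition self_adjoint_op :: "'a op \<Rightarrow> bool" where
  "self_adjoint_op T \<longleftrightarrow> bounded_op T \<and>
     (\<forall>f\<in>ell2. \<forall>g\<in>ell2. l2inner (T f) g = l2inner f (T g))"

definition op_le :: "'a op \<Rightarrow> 'a op \<Rightarrow> bool" where
  "op_le S T \<longleftrightarrow> (\<forall>f\<in>ell2. Im (l2inner f (\<lambda>x. T f x - S f x)) = 0 \<and>
                               Re (l2inner f (\<lambda>x. T f x - S f x)) \<ge> 0)"

text \<open>Index elements are taken of the operator
  type itself (large enough to reindex every net without changing its lubs).\<close>
definition monotone_complete :: "'a op set \<Rightarrow> bool" where
  "monotone_complete A \<longleftrightarrow>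
    (\<forall>(D :: 'a op set) (le :: 'a op \<Rightarrow> 'a op \<Rightarrow> bool) (N :: 'a op \<Rightarrow> 'a op).
      D \<noteq> {} \<and>
      (\<forall>i\<in>D. le i i) \<and>
      (\<forall>i\<in>D. \<forall>j\<in>D. \<forall>k\<in>D. le i j \<and> le j k \<longrightarrow> le i k) \<and>
      (\<forall>i\<in>D. \<forall>j\<in>D. \<exists>k\<in>D. le i k \<and> le j k) \<and>
      (\<forall>i\<in>D. N i \<in> A \<and> self_adjoint_op (N i)) \<and>
      (\<forall>i\<in>D. \<forall>j\<in>D. le i j \<longrightarrow> op_le (N i) (N j)) \<and>
      (\<exists>C. \<forall>i\<in>D. \<forall>f\<in>ell2. l2norm (N i f) \<le> C * l2norm f)
      \<longrightarrow>
      (\<exists>S\<in>A. self_adjoint_op S \<and> (\<forall>i\<in>D. op_le (N i) S) \<and>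
         (\<forall>U\<in>A. self_adjoint_op U \<and> (\<forall>i\<in>D. op_le (N i) U) \<longrightarrow> op_le S U)))"

end

theory Submission
  imports Defs
begin
lemma ell2_iff: "f \<in> ell2 \<longleftrightarrow> (\<lambda>x. (cmod (f x))^2) summable_on UNIV"
  by (simp add: ell2_def)

lemma sq_sum_le: "((a::real) + b)^2 \<le> 2*a^2 + 2*b^2"
proof -
  have "0 \<le> (a - b)^2" by simp
  then show ?thesis by (simp add: power2_eq_square algebra_simps)
qed

lemma ell2_lincomb:
  assumes "f \<in> ell2" "g \<in> ell2"
  shows "(\<lambda>x. a * f x + b * g x) \<in> ell2"
proof -
  have s: "(\<lambda>x. (2*(cmod a)^2)*(cmod (f x))^2 + (2*(cmod b)^2)*(cmod (g x))^2) summable_on UNIV"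
    using assms by (intro summable_on_add summable_on_cmult_right) (auto simp: ell2_def)
  have "(cmod (a * f x + b * g x))^2 \<le> (2*(cmod a)^2)*(cmod (f x))^2 + (2*(cmod b)^2)*(cmod (g x))^2" for x
  proof -
    have "cmod (a * f x + b * g x) \<le> cmod a * cmod (f x) + cmod b * cmod (g x)"
      by (metis norm_mult norm_triangle_ineq)
    then have "(cmod (a * f x + b * g x))^2 \<le> (cmod a * cmod (f x) + cmod b * cmod (g x))^2"
      by (simp add: power_mono)
    also have "\<dots> \<le> 2*(cmod a * cmod (f x))^2 + 2*(cmod b * cmod (g x))^2" by (rule sq_sum_le)
    finally show ?thesis by (simp add: power_mult_distrib)
  qed
  then show ?thesis unfolding ell2_def
    by (auto intro!: summable_on_comparison_test[OF s])
qed

lemma ell2_add: "f \<in> ell2 \<Longrightarrow> g \<in> ell2 \<Longrightarrow> (\<lambda>x. f x + g x) \<in> ell2"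
  using ell2_lincomb[of f g 1 1] by simp

lemma ell2_diff: "f \<in> ell2 \<Longrightarrow> g \<in> ell2 \<Longrightarrow> (\<lambda>x. f x - g x) \<in> ell2"
  using ell2_lincomb[of f g 1 "-1"] by simp

lemma ell2_finite_support:
  assumes "finite G" "\<And>x. x \<notin> G \<Longrightarrow> f x = 0"
  shows "f \<in> ell2"
proof -
  have "(\<lambda>x. (cmod (f x))^2) summable_on G" using assms(1) by simp
  moreover have "(\<lambda>x. (cmod (f x))^2) summable_on UNIV \<longleftrightarrow> (\<lambda>x. (cmod (f x))^2) summable_on G"
    by (rule summable_on_cong_neutral) (use assms in auto)
  ultimately show ?thesis unfolding ell2_def by simp
qed

lemma delta_ell2: "delta x \<in> ell2"
  by (rule ell2_finite_support[of "{x}"]) (auto simp: delta_def)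

lemma amgm: "(a::real) \<ge> 0 \<Longrightarrow> b \<ge> 0 \<Longrightarrow> d > 0 \<Longrightarrow> a * b \<le> (a^2 / d + d * b^2) / 2"
proof -
  assume "a \<ge> 0" "b \<ge> 0" "d > 0"
  have "0 \<le> (a - d*b)^2" by simp
  then have "a*b*(2*d) \<le> a^2 + d^2*b^2" by (simp add: power2_eq_square algebra_simps)
  then have "a*b \<le> (a^2 + d^2*b^2)/(2*d)" using \<open>d>0\<close> by (simp add: pos_le_divide_eq)
  also have "(a^2 + d^2*b^2)/(2*d) = (a^2 / d + d * b^2) / 2" using \<open>d>0\<close>
    by (simp add: add_divide_distrib power2_eq_square)
  finally show ?thesis .
qed

lemma abs_inner_summable:
  assumes "f \<in> ell2" "g \<in> ell2"
  shows "(\<lambda>x. cmod (f x) * cmod (g x)) summable_on A"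
proof -
  have s: "(\<lambda>x. (1/2)*(cmod (f x))^2 + (1/2)*(cmod (g x))^2) summable_on UNIV"
    using assms by (intro summable_on_add summable_on_cmult_right) (auto simp: ell2_def)
  have "(\<lambda>x. cmod (f x) * cmod (g x)) summable_on UNIV"
  proof (rule summable_on_comparison_test[OF s])
    fix x
    have "cmod (f x) * cmod (g x) \<le> ((cmod (f x))^2/1 + 1*(cmod (g x))^2)/2" by (rule amgm) auto
    then show "cmod (f x) * cmod (g x) \<le> (1/2)*(cmod (f x))^2 + (1/2)*(cmod (g x))^2" by simp
  qed simp
  then show ?thesis using summable_on_subset by blast
qed

lemma inner_summable:
  assumes "f \<in> ell2" "g \<in> ell2"
  shows "(\<lambda>x. cnj (f x) * g x) summable_on A"
proof -
  have "(\<lambda>x. norm (cnj (f x) * g x)) summable_on A"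
    using abs_inner_summable[OF assms, of A] by (simp add: norm_mult)
  then show ?thesis by (simp add: summable_on_iff_abs_summable_on_complex)
qed

lemma l2inner_lin_right:
  assumes "f \<in> ell2" "g \<in> ell2" "h \<in> ell2"
  shows "l2inner f (\<lambda>x. a * g x + b * h x) = a * l2inner f g + b * l2inner f h"
proof -
  have "l2inner f (\<lambda>x. a * g x + b * h x) = (\<Sum>\<^sub>\<infinity>x. a * (cnj (f x) * g x) + b * (cnj (f x) * h x))"
    unfolding l2inner_def by (simp add: algebra_simps)
  also have "\<dots> = (\<Sum>\<^sub>\<infinity>x. a * (cnj (f x) * g x)) + (\<Sum>\<^sub>\<infinity>x. b * (cnj (f x) * h x))"
    by (intro infsum_add summable_on_cmult_right inner_summable assms)
  also have "\<dots> = a * l2inner f g + b * l2inner f h"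
    unfolding l2inner_def
    using infsum_cmult_right[OF inner_summable[OF assms(1,2)], of a]
      infsum_cmult_right[OF inner_summable[OF assms(1,3)], of b] by simp
  finally show ?thesis .
qed

lemma l2inner_diff_right:
  assumes "f \<in> ell2" "g \<in> ell2" "h \<in> ell2"
  shows "l2inner f (\<lambda>x. g x - h x) = l2inner f g - l2inner f h"
  using l2inner_lin_right[OF assms, of 1 "-1"] by simp

lemma l2inner_cnj: "cnj (l2inner f g) = l2inner g f"
  unfolding l2inner_def by (simp flip: infsum_cnj add: mult.commute)

lemma l2inner_lin_left:
  assumes "f \<in> ell2" "g \<in> ell2" "h \<in> ell2"
  shows "l2inner (\<lambda>x. a * f x + b * g x) h = cnj a * l2inner f h + cnj b * l2inner g h"
proof -
  have "l2inner h (\<lambda>x. a * f x + b * g x) = a*l2inner h f + b*l2inner h g"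
    by (rule l2inner_lin_right) (use assms in auto)
  then have "cnj (l2inner h (\<lambda>x. a * f x + b * g x)) = cnj a * cnj (l2inner h f) + cnj b * cnj (l2inner h g)"
    by simp
  then show ?thesis by (simp only: l2inner_cnj)
qed

lemma l2inner_fin:
  assumes "finite G" "\<And>x. x \<notin> G \<Longrightarrow> u x = 0"
  shows "l2inner u v = (\<Sum>x\<in>G. cnj (u x) * v x)"
proof -
  have "l2inner u v = infsum (\<lambda>x. cnj (u x) * v x) G"
    unfolding l2inner_def by (rule infsum_cong_neutral) (use assms in auto)
  then show ?thesis using assms(1) by simp
qed

lemma l2inner_delta: "l2inner (delta x) v = v x"
  by (subst l2inner_fin[of "{x}"]) (auto simp: delta_def)

lemma l2norm_sq: "(l2norm f)^2 = (\<Sum>\<^sub>\<infinity>x. (cmod (f x))^2)"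
proof -
  have "0 \<le> (\<Sum>\<^sub>\<infinity>x. (cmod (f x))^2)" by (rule infsum_nonneg) simp
  then show ?thesis unfolding l2norm_def by simp
qed

lemma l2norm_nonneg: "l2norm f \<ge> 0"
proof -
  have "0 \<le> (\<Sum>\<^sub>\<infinity>x. (cmod (f x))^2)" by (rule infsum_nonneg) simp
  then show ?thesis unfolding l2norm_def by simp
qed

lemma fin_le_l2norm:
  assumes "f \<in> ell2" "finite G"
  shows "(\<Sum>x\<in>G. (cmod (f x))^2) \<le> (l2norm f)^2"
  unfolding l2norm_sq using assms by (intro finite_sum_le_infsum) (auto simp: ell2_def)

lemma point_le_l2norm:
  assumes "f \<in> ell2" shows "cmod (f x) \<le> l2norm f"
proof -
  have "(cmod (f x))^2 \<le> (l2norm f)^2" using fin_le_l2norm[OF assms, of "{x}"] by simp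
  then show ?thesis using l2norm_nonneg by (rule power2_le_imp_le)
qed

lemma sq_bound:
  assumes "l2norm g \<le> C * l2norm f"
  shows "(l2norm g)^2 \<le> C^2 * (l2norm f)^2"
proof -
  have "(l2norm g)^2 \<le> (C * l2norm f)^2" using assms l2norm_nonneg by (intro power_mono) auto
  then show ?thesis by (simp add: power_mult_distrib)
qed

lemma l2inner_split:
  assumes "u \<in> ell2" "v \<in> ell2" "finite G"
  shows "l2inner u v = (\<Sum>x\<in>G. cnj (u x) * v x) + infsum (\<lambda>x. cnj (u x) * v x) (-G)"
proof -
  have "l2inner u v = infsum (\<lambda>x. cnj (u x) * v x) (G \<union> -G)"
    unfolding l2inner_def by simp
  also have "\<dots> = infsum (\<lambda>x. cnj (u x) * v x) G + infsum (\<lambda>x. cnj (u x) * v x) (-G)"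
    by (intro infsum_Un_disjoint inner_summable assms) auto
  finally show ?thesis using assms(3) by simp
qed

lemma weighted_inner_bound:
  assumes "f \<in> ell2" "g \<in> ell2" "d > 0"
  shows "cmod (infsum (\<lambda>x. cnj (f x) * g x) A) \<le>
     (infsum (\<lambda>x. (cmod (f x))^2) A / d + d * infsum (\<lambda>x. (cmod (g x))^2) A) / 2"
proof -
  have sf: "(\<lambda>x. (cmod (f x))^2) summable_on A" "(\<lambda>x. (cmod (g x))^2) summable_on A"
    using assms summable_on_subset by (auto simp: ell2_def)
  have "cmod (infsum (\<lambda>x. cnj (f x) * g x) A) \<le> infsum (\<lambda>x. norm (cnj (f x) * g x)) A"
    by (rule norm_infsum_bound) (use abs_inner_summable[OF assms(1,2)] in \<open>simp add: norm_mult\<close>)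
  also have "\<dots> \<le> infsum (\<lambda>x. (1/(2*d)) * (cmod (f x))^2 + (d/2) * (cmod (g x))^2) A"
    apply (rule infsum_mono)
    using abs_inner_summable[OF assms(1,2)] apply (simp add: norm_mult)
     apply (intro summable_on_add summable_on_cmult_right sf)
  proof -
    fix x
    have "cmod (f x) * cmod (g x) \<le> ((cmod (f x))^2/d + d*(cmod (g x))^2)/2" by (rule amgm) (use assms in auto)
    then show "norm (cnj (f x) * g x) \<le> (1/(2*d)) * (cmod (f x))^2 + (d/2) * (cmod (g x))^2"
      by (simp add: norm_mult field_simps)
  qed
  also have "\<dots> = (infsum (\<lambda>x. (cmod (f x))^2) A / d + d * infsum (\<lambda>x. (cmod (g x))^2) A) / 2"
    using infsum_add[OF summable_on_cmult_right[OF sf(1), of "1/(2*d)"] summable_on_cmult_right[OF sf(2), of "d/2"]]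
      infsum_cmult_right[OF sf(1), of "1/(2*d)"] infsum_cmult_right[OF sf(2), of "d/2"]
    by (simp add: field_simps)
  finally show ?thesis .
qed

lemma inner_bound:
  assumes "f \<in> ell2" "g \<in> ell2"
  shows "cmod (l2inner f g) \<le> ((l2norm f)^2 + (l2norm g)^2) / 2"
  using weighted_inner_bound[OF assms, of 1 UNIV] unfolding l2inner_def l2norm_sq by simp

lemma compare_norm:
  assumes "f \<in> ell2" "finite G" "\<And>x. x \<notin> G \<Longrightarrow> cmod (g x) \<le> cmod (f x)"
    "(\<Sum>x\<in>G. (cmod (g x))^2) \<le> (\<Sum>x\<in>G. (cmod (f x))^2)"
  shows "g \<in> ell2" "l2norm g \<le> l2norm f"
proof -
  have sf: "(\<lambda>x. (cmod (f x))^2) summable_on (-G)"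
    using assms(1) summable_on_subset by (auto simp: ell2_def)
  have sg: "(\<lambda>x. (cmod (g x))^2) summable_on (-G)"
    by (rule summable_on_comparison_test[OF sf]) (use assms(3) in \<open>auto intro: power_mono\<close>)
  have sgU: "(\<lambda>x. (cmod (g x))^2) summable_on (G \<union> -G)"
    by (intro summable_on_Un_disjoint sg) (use assms(2) in auto)
  then show "g \<in> ell2" by (simp add: ell2_def)
  have "(l2norm g)^2 = infsum (\<lambda>x. (cmod (g x))^2) (G \<union> -G)" by (simp add: l2norm_sq)
  also have "\<dots> = (\<Sum>x\<in>G. (cmod (g x))^2) + infsum (\<lambda>x. (cmod (g x))^2) (-G)"
    by (subst infsum_Un_disjoint) (use sg assms(2) in auto)
  also have "\<dots> \<le> (\<Sum>x\<in>G. (cmod (f x))^2) + infsum (\<lambda>x. (cmod (f x))^2) (-G)"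
    by (intro add_mono assms(4) infsum_mono sf sg) (use assms(3) in \<open>auto intro: power_mono\<close>)
  also have "\<dots> = infsum (\<lambda>x. (cmod (f x))^2) (G \<union> -G)"
    by (subst infsum_Un_disjoint) (use sf assms(2) in auto)
  also have "\<dots> = (l2norm f)^2" by (simp add: l2norm_sq)
  finally show "l2norm g \<le> l2norm f"
    using l2norm_nonneg by (rule power2_le_imp_le)
qed

definition netF :: "'i set \<Rightarrow> ('i \<Rightarrow> 'i \<Rightarrow> bool) \<Rightarrow> 'i filter" where
  "netF D le = (INF i\<in>D. principal {j\<in>D. le i j})"

lemma eventually_netF:
  assumes "D \<noteq> {}" "\<forall>i\<in>D. \<forall>j\<in>D. \<forall>k\<in>D. le i j \<and> le j k \<longrightarrow> le i k"
    "\<forall>i\<in>D. \<forall>j\<in>D. \<exists>k\<in>D. le i k \<and> le j k"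
  shows "eventually P (netF D le) \<longleftrightarrow> (\<exists>i\<in>D. \<forall>j\<in>D. le i j \<longrightarrow> P j)"
proof -
  have base: "\<exists>x\<in>D. principal {j\<in>D. le x j} \<le> inf (principal {j\<in>D. le a j}) (principal {j\<in>D. le b j})"
    if "a \<in> D" "b \<in> D" for a b
  proof -
    have "\<exists>k. k \<in> D \<and> le a k \<and> le b k" using assms(3) that by blast
    then obtain k where k: "k \<in> D" "le a k" "le b k" by blast
    have "{j\<in>D. le k j} \<subseteq> {j\<in>D. le a j} \<inter> {j\<in>D. le b j}"
    proof
      fix j assume j: "j \<in> {j\<in>D. le k j}"
      then have jD: "j \<in> D" and kj: "le k j" by auto
      have "le a j" using assms(2)[rule_format, OF that(1) k(1) jD] k(2) kj by simp
      moreover have "le b j" using assms(2)[rule_format, OF that(2) k(1) jD] k(3) kj by simp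
      ultimately show "j \<in> {j\<in>D. le a j} \<inter> {j\<in>D. le b j}" using jD by blast
    qed
    then have "principal {j\<in>D. le k j} \<le> inf (principal {j\<in>D. le a j}) (principal {j\<in>D. le b j})"
      by (simp only: inf_principal principal_le_iff)
    then show ?thesis by (rule bexI[OF _ k(1)])
  qed
  have "eventually P (netF D le) = (\<exists>b\<in>D. eventually P (principal {j\<in>D. le b j}))"
    unfolding netF_def by (rule eventually_INF_base[OF assms(1) base])
  also have "\<dots> = (\<exists>i\<in>D. \<forall>j\<in>D. le i j \<longrightarrow> P j)"
    unfolding eventually_principal by blast
  finally show ?thesis .
qed

lemma mono_net_tendsto:
  fixes \<phi> :: "'i \<Rightarrow> real"
  assumes ev: "\<And>P. eventually P F \<longleftrightarrow> (\<exists>i\<in>D. \<forall>j\<in>D. le i j \<longrightarrow> P j)"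
    and ne: "D \<noteq> {}" and mono: "\<And>i j. i \<in> D \<Longrightarrow> j \<in> D \<Longrightarrow> le i j \<Longrightarrow> \<phi> i \<le> \<phi> j"
    and bdd: "bdd_above (\<phi> ` D)"
  shows "(\<phi> \<longlongrightarrow> (SUP i\<in>D. \<phi> i)) F"
proof (rule order_tendstoI)
  fix a assume "a < (SUP i\<in>D. \<phi> i)"
  then obtain i where i: "i \<in> D" "a < \<phi> i" using less_cSUP_iff[OF ne bdd] by auto
  show "eventually (\<lambda>j. a < \<phi> j) F" unfolding ev
  proof (intro bexI[of _ i] ballI impI)
    fix j assume "j \<in> D" "le i j"
    then have "\<phi> i \<le> \<phi> j" by (intro mono i(1))
    with i(2) show "a < \<phi> j" by linarith
  qed (rule i(1))
next
  fix a assume a: "(SUP i\<in>D. \<phi> i) < a"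
  obtain i where "i \<in> D" using ne by blast
  have "\<forall>j\<in>D. \<phi> j < a"
  proof
    fix j assume "j \<in> D"
    have "\<phi> j \<le> (SUP i\<in>D. \<phi> i)" by (rule cSUP_upper[OF \<open>j \<in> D\<close> bdd])
    with a show "\<phi> j < a" by linarith
  qed
  then show "eventually (\<lambda>j. \<phi> j < a) F" unfolding ev using \<open>i \<in> D\<close> by blast
qed

lemma l2norm_diff_sq:
  assumes "u \<in> ell2" "v \<in> ell2"
  shows "(l2norm (\<lambda>x. u x - v x))^2 \<le> 2*(l2norm u)^2 + 2*(l2norm v)^2"
proof -
  have su: "(\<lambda>x. (cmod (u x))^2) summable_on UNIV" "(\<lambda>x. (cmod (v x))^2) summable_on UNIV"
    using assms by (auto simp: ell2_def)
  have sd: "(\<lambda>x. (cmod (u x - v x))^2) summable_on UNIV"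
    using ell2_diff[OF assms] by (simp add: ell2_def)
  have "(\<Sum>\<^sub>\<infinity>x. (cmod (u x - v x))^2) \<le> (\<Sum>\<^sub>\<infinity>x. 2*(cmod (u x))^2 + 2*(cmod (v x))^2)"
  proof (rule infsum_mono[OF sd])
    show "(\<lambda>x. 2*(cmod (u x))^2 + 2*(cmod (v x))^2) summable_on UNIV"
      by (intro summable_on_add summable_on_cmult_right su)
    fix x
    have "cmod (u x - v x) \<le> cmod (u x) + cmod (v x)" by (rule norm_triangle_ineq4)
    then have "(cmod (u x - v x))^2 \<le> (cmod (u x) + cmod (v x))^2" by (simp add: power_mono)
    also have "\<dots> \<le> 2*(cmod (u x))^2 + 2*(cmod (v x))^2" by (rule sq_sum_le)
    finally show "(cmod (u x - v x))^2 \<le> 2*(cmod (u x))^2 + 2*(cmod (v x))^2" .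
  qed
  also have "\<dots> = 2*(l2norm u)^2 + 2*(l2norm v)^2"
    unfolding l2norm_sq
    using infsum_add[OF summable_on_cmult_right[OF su(1), of 2] summable_on_cmult_right[OF su(2), of 2]]
      infsum_cmult_right[OF su(1), of 2] infsum_cmult_right[OF su(2), of 2] by simp
  finally show ?thesis by (simp add: l2norm_sq)
qed

lemma weak_limit:
  fixes F :: "'i filter" and h :: "'i \<Rightarrow> 'a vec" and g :: "'a vec"
  assumes F: "F \<noteq> bot"
    and conv: "\<And>x. ((\<lambda>i. h i x) \<longlongrightarrow> g x) F"
    and ev: "eventually (\<lambda>i. h i \<in> ell2 \<and> (l2norm (h i))^2 \<le> M) F"
  shows "g \<in> ell2" "(l2norm g)^2 \<le> M"
    "\<And>f::'a vec. f \<in> ell2 \<Longrightarrow> ((\<lambda>i. l2inner f (h i)) \<longlongrightarrow> l2inner f g) F"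
proof -
  have fin: "(\<Sum>x\<in>G. (cmod (g x))^2) \<le> M" if "finite G" for G
  proof (rule tendsto_upperbound[OF _ _ F])
    show "((\<lambda>i. \<Sum>x\<in>G. (cmod (h i x))^2) \<longlongrightarrow> (\<Sum>x\<in>G. (cmod (g x))^2)) F"
      by (intro tendsto_sum tendsto_power tendsto_norm conv)
    show "eventually (\<lambda>i. (\<Sum>x\<in>G. (cmod (h i x))^2) \<le> M) F"
      using ev
    proof eventually_elim
      case (elim i)
      have "(\<Sum>x\<in>G. (cmod (h i x))^2) \<le> (l2norm (h i))^2" by (rule fin_le_l2norm) (use elim that in auto)
      with elim show ?case by linarith
    qed
  qed
  have sg: "(\<lambda>x. (cmod (g x))^2) summable_on UNIV"
  proof (rule nonneg_bdd_above_summable_on)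
    show "bdd_above (sum (\<lambda>x. (cmod (g x))^2) ` {G. G \<subseteq> UNIV \<and> finite G})"
      by (rule bdd_aboveI[where M=M]) (use fin in blast)
  qed simp
  then show g: "g \<in> ell2" by (simp add: ell2_def)
  show gM: "(l2norm g)^2 \<le> M" unfolding l2norm_sq
    by (rule infsum_le_finite_sums[OF sg]) (use fin in auto)
  have "0 \<le> (l2norm g)^2" by simp
  with gM have M0: "M \<ge> 0" by linarith
  fix f :: "'a vec" assume f: "f \<in> ell2"
  show "((\<lambda>i. l2inner f (h i)) \<longlongrightarrow> l2inner f g) F"
  proof (rule tendstoI)
    fix e :: real assume e: "e > 0"
    define K where "K = 4*M + 1"
    have K: "K > 0" using M0 by (simp add: K_def)
    define d where "d = e / (2*K)"
    have d: "d > 0" using e K by (simp add: d_def)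
    have sf: "(\<lambda>x. (cmod (f x))^2) summable_on UNIV" using f by (simp add: ell2_def)
    obtain G where G: "finite G" "dist (\<Sum>x\<in>G. (cmod (f x))^2) (\<Sum>\<^sub>\<infinity>x. (cmod (f x))^2) \<le> d^2"
      using infsum_finite_approximation[OF sf, of "d^2"] d by auto
    have sfG: "(\<lambda>x. (cmod (f x))^2) summable_on (-G)" using sf summable_on_subset by blast
    have "(\<Sum>\<^sub>\<infinity>x. (cmod (f x))^2) = infsum (\<lambda>x. (cmod (f x))^2) (G \<union> -G)" by simp
    also have "\<dots> = (\<Sum>x\<in>G. (cmod (f x))^2) + infsum (\<lambda>x. (cmod (f x))^2) (-G)"
      by (subst infsum_Un_disjoint) (use sfG G(1) in auto)
    finally have tail: "infsum (\<lambda>x. (cmod (f x))^2) (-G) \<le> d^2"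
      using G(2) by (simp add: dist_real_def)
    have finpart: "((\<lambda>i. \<Sum>x\<in>G. cnj (f x) * (h i x - g x)) \<longlongrightarrow> (\<Sum>x\<in>G. cnj (f x) * (g x - g x))) F"
      by (intro tendsto_intros conv)
    then have "eventually (\<lambda>i. dist (\<Sum>x\<in>G. cnj (f x) * (h i x - g x)) 0 < e/2) F"
      using e by (intro tendstoD) auto
    with ev show "eventually (\<lambda>i. dist (l2inner f (h i)) (l2inner f g) < e) F"
    proof eventually_elim
      case (elim i)
      then have hi: "h i \<in> ell2" "(l2norm (h i))^2 \<le> M" by auto
      define r where "r = (\<lambda>x. h i x - g x)"
      have r: "r \<in> ell2" unfolding r_def by (rule ell2_diff[OF hi(1) g])
      have rM: "(l2norm r)^2 \<le> 4*M"
        using l2norm_diff_sq[OF hi(1) g] hi(2) gM unfolding r_def by linarith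
      have "l2inner f (h i) - l2inner f g = l2inner f r"
        unfolding r_def by (rule l2inner_diff_right[OF f hi(1) g, symmetric])
      also have "\<dots> = (\<Sum>x\<in>G. cnj (f x) * r x) + infsum (\<lambda>x. cnj (f x) * r x) (-G)"
        by (rule l2inner_split[OF f r G(1)])
      finally have eq: "l2inner f (h i) - l2inner f g = (\<Sum>x\<in>G. cnj (f x) * r x) + infsum (\<lambda>x. cnj (f x) * r x) (-G)" .
      have srG: "(\<lambda>x. (cmod (r x))^2) summable_on (-G)" using r summable_on_subset by (auto simp: ell2_def)
      have rtail: "infsum (\<lambda>x. (cmod (r x))^2) (-G) \<le> 4*M"
      proof -
        have "infsum (\<lambda>x. (cmod (r x))^2) (-G) \<le> infsum (\<lambda>x. (cmod (r x))^2) UNIV"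
          by (rule infsum_mono_neutral[OF srG]) (use r in \<open>auto simp: ell2_def\<close>)
        then show ?thesis using rM by (simp add: l2norm_sq)
      qed
      have "cmod (infsum (\<lambda>x. cnj (f x) * r x) (-G)) \<le>
         (infsum (\<lambda>x. (cmod (f x))^2) (-G) / d + d * infsum (\<lambda>x. (cmod (r x))^2) (-G)) / 2"
        by (rule weighted_inner_bound[OF f r d])
      also have "\<dots> \<le> (d^2 / d + d * (4*M)) / 2"
      proof -
        have "infsum (\<lambda>x. (cmod (f x))^2) (-G) / d \<le> d^2 / d"
          using tail d by (intro divide_right_mono) auto
        moreover have "d * infsum (\<lambda>x. (cmod (r x))^2) (-G) \<le> d * (4*M)"
          using rtail d by (intro mult_left_mono) auto
        ultimately show ?thesis by (rule divide_right_mono[OF add_mono]) simp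
      qed
      also have "d^2 / d = d" using d by (simp add: power2_eq_square)
      also have "(d + d * (4*M)) / 2 = d * K / 2" by (simp add: K_def algebra_simps)
      also have "\<dots> = e/4" using K by (simp add: d_def)
      finally have t2: "cmod (infsum (\<lambda>x. cnj (f x) * r x) (-G)) \<le> e/4" .
      have t1: "cmod (\<Sum>x\<in>G. cnj (f x) * r x) < e/2" using elim by (simp add: r_def dist_norm)
      have "dist (l2inner f (h i)) (l2inner f g) = cmod (l2inner f (h i) - l2inner f g)" by (simp add: dist_norm)
      also have "\<dots> \<le> cmod (\<Sum>x\<in>G. cnj (f x) * r x) + cmod (infsum (\<lambda>x. cnj (f x) * r x) (-G))"
        unfolding eq by (rule norm_triangle_ineq)
      also have "\<dots> < e" using t1 t2 e by linarith
      finally show ?case .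
    qed
  qed
qed

lemma bop_lin: "bounded_op T \<Longrightarrow> f \<in> ell2 \<Longrightarrow> g \<in> ell2 \<Longrightarrow>
   T (\<lambda>x. a * f x + b * g x) = (\<lambda>x. a * T f x + b * T g x)"
  unfolding bounded_op_def by blast

lemma bop_ell2: "bounded_op T \<Longrightarrow> f \<in> ell2 \<Longrightarrow> T f \<in> ell2"
  unfolding bounded_op_def by blast

definition lc :: "'a vec \<Rightarrow> 'a vec \<Rightarrow> complex \<Rightarrow> 'a vec" where
  "lc u v c = (\<lambda>x. u x + c * v x)"

definition qf :: "'a op \<Rightarrow> 'a vec \<Rightarrow> complex" where
  "qf T w = l2inner w (T w)"

lemma lc_ell2: "u \<in> ell2 \<Longrightarrow> v \<in> ell2 \<Longrightarrow> lc u v c \<in> ell2"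
  unfolding lc_def using ell2_lincomb[of u v 1 c] by simp

lemma bop_lc: "bounded_op T \<Longrightarrow> u \<in> ell2 \<Longrightarrow> v \<in> ell2 \<Longrightarrow> T (lc u v c) = lc (T u) (T v) c"
  unfolding lc_def using bop_lin[of T u v 1 c] by simp

lemma inner_lc_right: "f \<in> ell2 \<Longrightarrow> u \<in> ell2 \<Longrightarrow> v \<in> ell2 \<Longrightarrow>
   l2inner f (lc u v c) = l2inner f u + c * l2inner f v"
  unfolding lc_def using l2inner_lin_right[of f u v 1 c] by simp

lemma inner_lc_left: "u \<in> ell2 \<Longrightarrow> v \<in> ell2 \<Longrightarrow> f \<in> ell2 \<Longrightarrow>
   l2inner (lc u v c) f = l2inner u f + cnj c * l2inner v f"
  unfolding lc_def using l2inner_lin_left[of u v f 1 c] by simp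

lemma quad_expand:
  assumes T: "bounded_op T" and u: "u \<in> ell2" and v: "v \<in> ell2"
  shows "qf T (lc u v c) = l2inner u (T u) + c * l2inner u (T v) + cnj c * l2inner v (T u)
           + cnj c * c * l2inner v (T v)"
proof -
  have Tu: "T u \<in> ell2" and Tv: "T v \<in> ell2" using T u v by (auto intro: bop_ell2)
  have w: "lc u v c \<in> ell2" by (rule lc_ell2[OF u v])
  have "qf T (lc u v c) = l2inner (lc u v c) (lc (T u) (T v) c)"
    unfolding qf_def bop_lc[OF T u v] ..
  also have "\<dots> = l2inner (lc u v c) (T u) + c * l2inner (lc u v c) (T v)"
    by (rule inner_lc_right[OF w Tu Tv])
  also have "\<dots> = (l2inner u (T u) + cnj c * l2inner v (T u)) + c * (l2inner u (T v) + cnj c * l2inner v (T v))"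
    by (simp add: inner_lc_left[OF u v Tu] inner_lc_left[OF u v Tv])
  finally show ?thesis by (simp add: algebra_simps)
qed

lemma polar:
  assumes T: "bounded_op T" and u: "u \<in> ell2" and v: "v \<in> ell2"
  shows "l2inner u (T v) = (qf T (lc u v 1) - qf T (lc u v (-1))) / 4
                         + (qf T (lc u v \<i>) - qf T (lc u v (-\<i>))) / (4 * \<i>)"
proof -
  define A where "A = l2inner u (T u)"
  define B where "B = l2inner u (T v)"
  define C where "C = l2inner v (T u)"
  define E where "E = l2inner v (T v)"
  have h1: "(qf T (lc u v 1) - qf T (lc u v (-1))) / 4 = (B + C) / 2"
    unfolding quad_expand[OF T u v] A_def[symmetric] B_def[symmetric] C_def[symmetric] E_def[symmetric]
    by (simp add: field_simps)
  have h2: "(qf T (lc u v \<i>) - qf T (lc u v (-\<i>))) / (4 * \<i>) = (B - C) / 2"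
    unfolding quad_expand[OF T u v] A_def[symmetric] B_def[symmetric] C_def[symmetric] E_def[symmetric]
    by (simp add: field_simps)
  have "(qf T (lc u v 1) - qf T (lc u v (-1))) / 4
                         + (qf T (lc u v \<i>) - qf T (lc u v (-\<i>))) / (4 * \<i>) = (B + C) / 2 + (B - C) / 2"
    by (simp only: h1 h2)
  also have "\<dots> = B" by (simp add: field_simps)
  finally show ?thesis by (simp add: B_def)
qed

lemma sa_real:
  assumes "self_adjoint_op T" "f \<in> ell2"
  shows "l2inner f (T f) = complex_of_real (Re (l2inner f (T f)))"
proof -
  have "l2inner (T f) f = l2inner f (T f)" using assms unfolding self_adjoint_op_def by blast
  moreover have "cnj (l2inner f (T f)) = l2inner (T f) f" by (rule l2inner_cnj)
  ultimately have "cnj (l2inner f (T f)) = l2inner f (T f)" by simp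
  then have "Im (cnj (l2inner f (T f))) = Im (l2inner f (T f))" by simp
  then have "Im (l2inner f (T f)) = 0" by simp
  then show ?thesis by (simp add: complex_eq_iff)
qed

lemma mono_lub:
  fixes D :: "'i set" and le :: "'i \<Rightarrow> 'i \<Rightarrow> bool" and N :: "'i \<Rightarrow> 'a op"
  assumes ne: "D \<noteq> {}" and refl: "\<forall>i\<in>D. le i i"
    and trans: "\<forall>i\<in>D. \<forall>j\<in>D. \<forall>k\<in>D. le i j \<and> le j k \<longrightarrow> le i k"
    and dir: "\<forall>i\<in>D. \<forall>j\<in>D. \<exists>k\<in>D. le i k \<and> le j k"
    and sa: "\<forall>i\<in>D. self_adjoint_op (N i)"
    and mono: "\<forall>i\<in>D. \<forall>j\<in>D. le i j \<longrightarrow> op_le (N i) (N j)"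
    and bnd: "\<forall>i\<in>D. \<forall>f\<in>ell2. l2norm (N i f) \<le> C * l2norm f"
  shows "\<exists>S. bounded_op S \<and> self_adjoint_op S \<and> (\<forall>i\<in>D. op_le (N i) S) \<and>
     (\<forall>U. self_adjoint_op U \<and> (\<forall>i\<in>D. op_le (N i) U) \<longrightarrow> op_le S U)"
proof -
  define F where "F = netF D le"
  have ev: "eventually P F \<longleftrightarrow> (\<exists>i\<in>D. \<forall>j\<in>D. le i j \<longrightarrow> P j)" for P
    unfolding F_def by (rule eventually_netF[OF ne trans dir])
  have Fnb: "F \<noteq> bot"
  proof
    assume "F = bot"
    then have "eventually (\<lambda>_. False) F" by simp
    then obtain i where "i \<in> D" "\<forall>j\<in>D. le i j \<longrightarrow> False" unfolding ev by blast
    with refl show False by blast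
  qed
  have evD: "eventually (\<lambda>i. i \<in> D) F"
    unfolding ev using ne by blast
  have bo: "bounded_op (N i)" if "i \<in> D" for i using sa that unfolding self_adjoint_op_def by blast
  have Nell2: "N i f \<in> ell2" if "i \<in> D" "f \<in> ell2" for i f using bop_ell2[OF bo[OF that(1)] that(2)] .
  have Nsa: "l2inner (N i f) g = l2inner f (N i g)" if "i \<in> D" "f \<in> ell2" "g \<in> ell2" for i f g
    using sa that unfolding self_adjoint_op_def by blast
  define q where "q f i = Re (l2inner f (N i f))" for f i
  have qreal: "l2inner f (N i f) = complex_of_real (q f i)" if "i \<in> D" "f \<in> ell2" for i f
    unfolding q_def using sa_real[of "N i" f] sa that by blast
  have qmono: "q f i \<le> q f j" if "i \<in> D" "j \<in> D" "le i j" "f \<in> ell2" for f i j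
  proof -
    have "op_le (N i) (N j)" using mono that by blast
    then have "Re (l2inner f (\<lambda>x. N j f x - N i f x)) \<ge> 0" unfolding op_le_def using that(4) by blast
    also have "l2inner f (\<lambda>x. N j f x - N i f x) = l2inner f (N j f) - l2inner f (N i f)"
      by (rule l2inner_diff_right) (use that Nell2 in auto)
    finally show ?thesis unfolding q_def by simp
  qed
  have qbdd: "q f i \<le> ((l2norm f)^2 + C^2 * (l2norm f)^2) / 2" if "i \<in> D" "f \<in> ell2" for f i
  proof -
    have "q f i \<le> cmod (l2inner f (N i f))" unfolding q_def by (rule complex_Re_le_cmod)
    also have "\<dots> \<le> ((l2norm f)^2 + (l2norm (N i f))^2) / 2"
      by (rule inner_bound) (use that Nell2 in auto)
    also have "(l2norm (N i f))^2 \<le> C^2 * (l2norm f)^2"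
      by (rule sq_bound) (use bnd that in blast)
    finally show ?thesis by (simp add: divide_right_mono)
  qed
  have bddq: "bdd_above ((q f) ` D)" if "f \<in> ell2" for f
    by (rule bdd_aboveI[where M="((l2norm f)^2 + C^2 * (l2norm f)^2) / 2"]) (use qbdd that in blast)
  define Q where "Q f = (SUP i\<in>D. q f i)" for f
  have qconv: "((\<lambda>i. q f i) \<longlongrightarrow> Q f) F" if "f \<in> ell2" for f
    unfolding Q_def by (rule mono_net_tendsto[OF ev ne _ bddq[OF that]]) (use qmono that in blast)
  have qle: "q f i \<le> Q f" if "f \<in> ell2" "i \<in> D" for f i
    unfolding Q_def by (rule cSUP_upper[OF that(2) bddq[OF that(1)]])
  have iconv: "((\<lambda>i. qf (N i) f) \<longlongrightarrow> complex_of_real (Q f)) F" if "f \<in> ell2" for f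
  proof -
    have "((\<lambda>i. complex_of_real (q f i)) \<longlongrightarrow> complex_of_real (Q f)) F"
      by (rule tendsto_of_real[OF qconv[OF that]])
    moreover have "eventually (\<lambda>i. complex_of_real (q f i) = qf (N i) f) F"
      using evD by eventually_elim (simp add: qf_def qreal that)
    ultimately show ?thesis by (rule Lim_transform_eventually)
  qed
  define S where "S f x = (complex_of_real (Q (lc (delta x) f 1)) - complex_of_real (Q (lc (delta x) f (-1)))) / 4
      + (complex_of_real (Q (lc (delta x) f \<i>)) - complex_of_real (Q (lc (delta x) f (-\<i>)))) / (4 * \<i>)" for f x
  have Sconv: "((\<lambda>i. N i f x) \<longlongrightarrow> S f x) F" if f: "f \<in> ell2" for f x
  proof -
    have w: "lc (delta x) f c \<in> ell2" for c by (rule lc_ell2[OF delta_ell2 f])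
    have "((\<lambda>i. (qf (N i) (lc (delta x) f 1) - qf (N i) (lc (delta x) f (-1))) / 4
         + (qf (N i) (lc (delta x) f \<i>) - qf (N i) (lc (delta x) f (-\<i>))) / (4 * \<i>)) \<longlongrightarrow> S f x) F"
      unfolding S_def by (intro tendsto_add tendsto_divide tendsto_diff iconv w tendsto_const) simp_all
    moreover have "eventually (\<lambda>i. (qf (N i) (lc (delta x) f 1) - qf (N i) (lc (delta x) f (-1))) / 4
         + (qf (N i) (lc (delta x) f \<i>) - qf (N i) (lc (delta x) f (-\<i>))) / (4 * \<i>) = N i f x) F"
      using evD
    proof eventually_elim
      case (elim i)
      have "N i f x = l2inner (delta x) (N i f)" by (simp add: l2inner_delta)
      also have "\<dots> = (qf (N i) (lc (delta x) f 1) - qf (N i) (lc (delta x) f (-1))) / 4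
         + (qf (N i) (lc (delta x) f \<i>) - qf (N i) (lc (delta x) f (-\<i>))) / (4 * \<i>)"
        by (rule polar[OF bo[OF elim] delta_ell2 f])
      finally show ?case by simp
    qed
    ultimately show ?thesis by (rule Lim_transform_eventually)
  qed
  have wl: "S f \<in> ell2 \<and> (l2norm (S f))^2 \<le> C^2 * (l2norm f)^2 \<and>
      (\<forall>g\<in>ell2. ((\<lambda>i. l2inner g (N i f)) \<longlongrightarrow> l2inner g (S f)) F)" if f: "f \<in> ell2" for f
  proof -
    have e: "eventually (\<lambda>i. N i f \<in> ell2 \<and> (l2norm (N i f))^2 \<le> C^2 * (l2norm f)^2) F"
      using evD
    proof eventually_elim
      case (elim i)
      then show ?case using Nell2[OF elim f] sq_bound bnd f by blast
    qed
    show ?thesis using weak_limit[OF Fnb Sconv[OF f] e] by blast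
  qed
  have Sell2: "S f \<in> ell2" if "f \<in> ell2" for f using wl[OF that] by blast
  have Sweak: "((\<lambda>i. l2inner g (N i f)) \<longlongrightarrow> l2inner g (S f)) F" if "f \<in> ell2" "g \<in> ell2" for f g
    using wl[OF that(1)] that(2) by blast
  have Snorm: "l2norm (S f) \<le> \<bar>C\<bar> * l2norm f" if "f \<in> ell2" for f
  proof -
    have "(l2norm (S f))^2 \<le> (\<bar>C\<bar> * l2norm f)^2"
      using wl[OF that] by (simp add: power_mult_distrib)
    then show ?thesis by (rule power2_le_imp_le) (simp add: l2norm_nonneg)
  qed
  have Slin: "S (\<lambda>x. a * f x + b * g x) = (\<lambda>x. a * S f x + b * S g x)"
    if f: "f \<in> ell2" and g: "g \<in> ell2" for f g a b
  proof
    fix x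
    have fg: "(\<lambda>x. a * f x + b * g x) \<in> ell2" by (rule ell2_lincomb[OF f g])
    have "((\<lambda>i. a * N i f x + b * N i g x) \<longlongrightarrow> a * S f x + b * S g x) F"
      by (intro tendsto_add tendsto_mult tendsto_const Sconv f g)
    moreover have "eventually (\<lambda>i. a * N i f x + b * N i g x = N i (\<lambda>x. a * f x + b * g x) x) F"
      using evD
    proof eventually_elim
      case (elim i)
      show ?case using bop_lin[OF bo[OF elim] f g, of a b] by simp
    qed
    ultimately have "((\<lambda>i. N i (\<lambda>x. a * f x + b * g x) x) \<longlongrightarrow> a * S f x + b * S g x) F"
      by (rule Lim_transform_eventually)
    then show "S (\<lambda>x. a * f x + b * g x) x = a * S f x + b * S g x"
      using tendsto_unique[OF Fnb Sconv[OF fg]] by blast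
  qed
  have Sbo: "bounded_op S"
    unfolding bounded_op_def using Sell2 Slin Snorm by blast
  have SQ: "l2inner f (S f) = complex_of_real (Q f)" if f: "f \<in> ell2" for f
    using tendsto_unique[OF Fnb Sweak[OF f f] iconv[OF f, unfolded qf_def]] .
  have Ssa: "self_adjoint_op S"
    unfolding self_adjoint_op_def
  proof (intro conjI Sbo ballI)
    fix f g :: "'a vec" assume f: "f \<in> ell2" and g: "g \<in> ell2"
    have "((\<lambda>i. cnj (l2inner g (N i f))) \<longlongrightarrow> cnj (l2inner g (S f))) F"
      by (intro tendsto_cnj Sweak f g)
    moreover have "eventually (\<lambda>i. cnj (l2inner g (N i f)) = l2inner f (N i g)) F"
      using evD by eventually_elim (simp add: l2inner_cnj Nsa f g)
    ultimately have "((\<lambda>i. l2inner f (N i g)) \<longlongrightarrow> cnj (l2inner g (S f))) F"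
      by (rule Lim_transform_eventually)
    then have "l2inner f (S g) = cnj (l2inner g (S f))"
      using tendsto_unique[OF Fnb Sweak[OF g f]] by blast
    then show "l2inner (S f) g = l2inner f (S g)" by (simp add: l2inner_cnj)
  qed
  have Sup: "op_le (N i) S" if i: "i \<in> D" for i
    unfolding op_le_def
  proof (intro ballI conjI)
    fix f :: "'a vec" assume f: "f \<in> ell2"
    have "l2inner f (\<lambda>x. S f x - N i f x) = l2inner f (S f) - l2inner f (N i f)"
      by (rule l2inner_diff_right[OF f Sell2[OF f] Nell2[OF i f]])
    also have "\<dots> = complex_of_real (Q f - q f i)" by (simp add: SQ f qreal i)
    finally have eq: "l2inner f (\<lambda>x. S f x - N i f x) = complex_of_real (Q f - q f i)" .
    show "Im (l2inner f (\<lambda>x. S f x - N i f x)) = 0" unfolding eq by simp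
    show "Re (l2inner f (\<lambda>x. S f x - N i f x)) \<ge> 0" unfolding eq using qle[OF f i] by simp
  qed
  have Sleast: "op_le S U" if U: "self_adjoint_op U" and Ub: "\<forall>i\<in>D. op_le (N i) U" for U
    unfolding op_le_def
  proof (intro ballI conjI)
    fix f :: "'a vec" assume f: "f \<in> ell2"
    have Ubo: "bounded_op U" using U unfolding self_adjoint_op_def by blast
    have Uf: "U f \<in> ell2" by (rule bop_ell2[OF Ubo f])
    have Ur: "l2inner f (U f) = complex_of_real (Re (l2inner f (U f)))" by (rule sa_real[OF U f])
    have "q f i \<le> Re (l2inner f (U f))" if i: "i \<in> D" for i
    proof -
      have "Re (l2inner f (\<lambda>x. U f x - N i f x)) \<ge> 0" using Ub i f unfolding op_le_def by blast
      also have "l2inner f (\<lambda>x. U f x - N i f x) = l2inner f (U f) - l2inner f (N i f)"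
        by (rule l2inner_diff_right[OF f Uf Nell2[OF i f]])
      finally show ?thesis unfolding q_def by simp
    qed
    then have QU: "Q f \<le> Re (l2inner f (U f))" unfolding Q_def by (intro cSUP_least ne) blast
    have "l2inner f (\<lambda>x. U f x - S f x) = l2inner f (U f) - l2inner f (S f)"
      by (rule l2inner_diff_right[OF f Uf Sell2[OF f]])
    also have "\<dots> = complex_of_real (Re (l2inner f (U f)) - Q f)" by (subst Ur) (simp add: SQ f)
    finally have eq: "l2inner f (\<lambda>x. U f x - S f x) = complex_of_real (Re (l2inner f (U f)) - Q f)" .
    show "Im (l2inner f (\<lambda>x. U f x - S f x)) = 0" unfolding eq by simp
    show "Re (l2inner f (\<lambda>x. U f x - S f x)) \<ge> 0" unfolding eq using QU by simp
  qed
  show ?thesis using Sbo Ssa Sup Sleast by blast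
qed

lemma l2inner_fin_right:
  assumes "finite G" "\<And>x. x \<notin> G \<Longrightarrow> v x = 0"
  shows "l2inner u v = (\<Sum>x\<in>G. cnj (u x) * v x)"
proof -
  have "l2inner u v = infsum (\<lambda>x. cnj (u x) * v x) G"
    unfolding l2inner_def by (rule infsum_cong_neutral) (use assms in auto)
  then show ?thesis using assms(1) by simp
qed

lemma l2norm_delta: "l2norm (delta y) = 1"
proof -
  have "(\<Sum>\<^sub>\<infinity>x. (cmod (delta y x))^2) = infsum (\<lambda>x. (cmod (delta y x))^2) {y}"
    by (rule infsum_cong_neutral) (auto simp: delta_def)
  then show ?thesis by (simp add: l2norm_def delta_def)
qed

lemma roe_of_prop:
  fixes T :: "('a::metric_space) op"
  assumes "bounded_op T" "propagation_le L T"
  shows "T \<in> uniform_roe"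
proof -
  have z: "l2norm (\<lambda>x. T f x - T f x) = 0" for f by (simp add: l2norm_def)
  have "0 \<le> e * l2norm f" if "e > 0" for e f using that l2norm_nonneg[of f] by simp
  have fp: "finite_propagation T" unfolding finite_propagation_def using assms by blast
  show ?thesis unfolding uniform_roe_def
  proof (intro CollectI conjI assms allI impI)
    fix e :: real assume e: "e > 0"
    have "\<forall>f\<in>ell2. l2norm (\<lambda>x. T f x - T f x) \<le> e * l2norm f"
      using z e l2norm_nonneg by (auto intro: mult_nonneg_nonneg less_imp_le)
    then show "\<exists>S. finite_propagation S \<and> (\<forall>f\<in>ell2. l2norm (\<lambda>x. T f x - S f x) \<le> e * l2norm f)"
      using fp by blast
  qed
qed

lemma quad_zero:
  fixes a b :: real
  assumes "\<And>r. a * r + b * r^2 \<ge> 0"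
  shows "a = 0"
proof (rule ccontr)
  assume a: "a \<noteq> 0"
  define m where "m = \<bar>b\<bar> + 1"
  have m: "m > 0" by (simp add: m_def)
  define r where "r = - a / m"
  have eq: "a * r + b * r^2 = (a^2 / m^2) * (b - m)"
    using m by (simp add: r_def field_simps power2_eq_square)
  have p1: "a^2 / m^2 > 0" using a m by simp
  have p2: "b - m < 0" by (simp add: m_def)
  have "(a^2 / m^2) * (b - m) < 0" by (rule mult_pos_neg[OF p1 p2])
  with eq have "a * r + b * r^2 < 0" by linarith
  with assms[of r] show False by linarith
qed

lemma quad_expand':
  assumes "u \<in> ell2" "v \<in> ell2" "T u \<in> ell2" "T v \<in> ell2" "T (lc u v c) = lc (T u) (T v) c"
  shows "l2inner (lc u v c) (T (lc u v c)) = l2inner u (T u) + c * l2inner u (T v) + cnj c * l2inner v (T u)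
           + cnj c * c * l2inner v (T v)"
proof -
  have w: "lc u v c \<in> ell2" by (rule lc_ell2[OF assms(1,2)])
  have "l2inner (lc u v c) (T (lc u v c)) = l2inner (lc u v c) (lc (T u) (T v) c)"
    unfolding assms(5) ..
  also have "\<dots> = l2inner (lc u v c) (T u) + c * l2inner (lc u v c) (T v)"
    by (rule inner_lc_right[OF w assms(3,4)])
  also have "\<dots> = (l2inner u (T u) + cnj c * l2inner v (T u)) + c * (l2inner u (T v) + cnj c * l2inner v (T v))"
    by (simp add: inner_lc_left[OF assms(1,2,3)] inner_lc_left[OF assms(1,2,4)])
  finally show ?thesis by (simp add: algebra_simps)
qed

lemma pos_kernel:
  assumes A: "bounded_op A" and B: "bounded_op B" and AB: "op_le A B" and h: "h \<in> ell2" and g: "g \<in> ell2"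
    and z: "l2inner h (\<lambda>x. B h x - A h x) = 0"
  shows "l2inner g (\<lambda>x. B h x - A h x) = 0"
proof -
  define Bd where "Bd w = (\<lambda>x. B w x - A w x)" for w
  have Bdl2: "Bd w \<in> ell2" if "w \<in> ell2" for w
    unfolding Bd_def by (rule ell2_diff) (use bop_ell2 A B that in auto)
  have Bdlin: "Bd (lc h g t) = lc (Bd h) (Bd g) t" for t
    unfolding Bd_def using bop_lc[OF A h g, of t] bop_lc[OF B h g, of t]
    by (auto simp: lc_def algebra_simps)
  define \<alpha> where "\<alpha> = l2inner h (Bd g)"
  define \<beta> where "\<beta> = l2inner g (Bd h)"
  define \<gamma> where "\<gamma> = l2inner g (Bd g)"
  have P: "l2inner (lc h g t) (Bd (lc h g t)) = t * \<alpha> + cnj t * \<beta> + cnj t * t * \<gamma>" for t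
    using quad_expand'[OF h g Bdl2[OF h] Bdl2[OF g] Bdlin[of t]] z
    by (simp add: \<alpha>_def \<beta>_def \<gamma>_def Bd_def)
  have pos: "Im (l2inner (lc h g t) (Bd (lc h g t))) = 0 \<and> Re (l2inner (lc h g t) (Bd (lc h g t))) \<ge> 0" for t
    using AB lc_ell2[OF h g, of t] unfolding op_le_def Bd_def by blast
  have r1: "Re (\<alpha> + \<beta>) * r + Re \<gamma> * r^2 \<ge> 0" for r :: real
    using pos[of "complex_of_real r"] unfolding P by (simp add: power2_eq_square algebra_simps)
  have r2: "Im (\<alpha> + \<beta>) * r + Im \<gamma> * r^2 \<ge> 0" for r :: real
    using pos[of "complex_of_real r"] unfolding P by (simp add: power2_eq_square algebra_simps)
  have r3: "(- Im (\<alpha> - \<beta>)) * r + Re \<gamma> * r^2 \<ge> 0" for r :: real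
    using pos[of "\<i> * complex_of_real r"] unfolding P by (simp add: power2_eq_square algebra_simps)
  have r4: "Re (\<alpha> - \<beta>) * r + Im \<gamma> * r^2 \<ge> 0" for r :: real
    using pos[of "\<i> * complex_of_real r"] unfolding P by (simp add: power2_eq_square algebra_simps)
  have e1: "Re (\<alpha> + \<beta>) = 0" by (rule quad_zero[OF r1])
  have e2: "Im (\<alpha> + \<beta>) = 0" by (rule quad_zero[OF r2])
  have e3: "Im (\<alpha> - \<beta>) = 0" using quad_zero[OF r3] by simp
  have e4: "Re (\<alpha> - \<beta>) = 0" by (rule quad_zero[OF r4])
  have "\<beta> = 0" using e1 e2 e3 e4 by (simp add: complex_eq_iff)
  then show ?thesis by (simp add: \<beta>_def Bd_def)
qed

lemma sum_real_nonneg: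
  fixes t :: "'b \<Rightarrow> complex"
  assumes "\<And>n. n \<in> A \<Longrightarrow> Im (t n) = 0 \<and> Re (t n) \<ge> 0"
  shows "Im (sum t A) = 0 \<and> Re (sum t A) \<ge> 0"
  using assms by (simp add: Im_sum Re_sum sum_nonneg)

lemma cnj_self: "cnj z * z = complex_of_real ((cmod z)^2)"
  using cmod_power2[of z] by (simp add: complex_eq_iff power2_eq_square)

lemma pair_pos1: "Im (cnj a * ((a + b) / 2) + cnj b * ((a + b) / 2)) = 0 \<and>
   Re (cnj a * ((a + b) / 2) + cnj b * ((a + b) / 2)) \<ge> 0"
proof
  show "Im (cnj a * ((a + b) / 2) + cnj b * ((a + b) / 2)) = 0" by (simp add: field_simps)
  have e: "Re (cnj a * ((a + b) / 2) + cnj b * ((a + b) / 2)) = ((Re a + Re b)^2 + (Im a + Im b)^2) / 2"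
    by (simp add: power2_eq_square field_simps)
  show "Re (cnj a * ((a + b) / 2) + cnj b * ((a + b) / 2)) \<ge> 0" unfolding e by simp
qed

lemma pair_pos2: "Im (cnj a * (a - (a + b) / 2) + cnj b * (b - (a + b) / 2)) = 0 \<and>
   Re (cnj a * (a - (a + b) / 2) + cnj b * (b - (a + b) / 2)) \<ge> 0"
proof
  show "Im (cnj a * (a - (a + b) / 2) + cnj b * (b - (a + b) / 2)) = 0" by (simp add: field_simps)
  have e: "Re (cnj a * (a - (a + b) / 2) + cnj b * (b - (a + b) / 2)) = ((Re a - Re b)^2 + (Im a - Im b)^2) / 2"
    by (simp add: power2_eq_square field_simps)
  show "Re (cnj a * (a - (a + b) / 2) + cnj b * (b - (a + b) / 2)) \<ge> 0" unfolding e by simp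
qed

lemma pair_pos3: "Im (cnj a * a + cnj b * b) = 0 \<and> Re (cnj a * a + cnj b * b) \<ge> 0"
  by (simp add: cnj_self)

lemma half_sq: "(cmod ((a + b) / 2))^2 + (cmod ((a + b) / 2))^2 \<le> (cmod a)^2 + (cmod b)^2"
proof -
  have "cmod (a + b) \<le> cmod a + cmod b" by (rule norm_triangle_ineq)
  then have "(cmod (a + b))^2 \<le> (cmod a + cmod b)^2" by (simp add: power_mono)
  also have "\<dots> \<le> 2*(cmod a)^2 + 2*(cmod b)^2" by (rule sq_sum_le)
  finally have "(cmod (a + b))^2 \<le> 2*(cmod a)^2 + 2*(cmod b)^2" .
  moreover have "(cmod ((a + b) / 2))^2 = (cmod (a + b))^2 / 4"
    by (simp add: norm_divide power_divide)
  ultimately show ?thesis by simp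
qed

lemma op_le_fin:
  assumes S: "bounded_op S" and T: "bounded_op T" and G: "finite G" and c: "c \<ge> 0"
    and off: "\<And>f x. f \<in> ell2 \<Longrightarrow> x \<notin> G \<Longrightarrow> T f x - S f x = complex_of_real c * f x"
    and fin: "\<And>f. f \<in> ell2 \<Longrightarrow> Im (\<Sum>x\<in>G. cnj (f x) * (T f x - S f x)) = 0 \<and>
                              Re (\<Sum>x\<in>G. cnj (f x) * (T f x - S f x)) \<ge> 0"
  shows "op_le S T"
  unfolding op_le_def
proof
  fix f :: "'a vec" assume f: "f \<in> ell2"
  define d where "d = (\<lambda>x. T f x - S f x)"
  have d: "d \<in> ell2" unfolding d_def by (rule ell2_diff) (use bop_ell2 S T f in auto)
  have eq: "l2inner f d = (\<Sum>x\<in>G. cnj (f x) * d x) + infsum (\<lambda>x. cnj (f x) * d x) (-G)"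
    by (rule l2inner_split[OF f d G])
  have sm: "(\<lambda>x. cnj (f x) * d x) summable_on (-G)" by (rule inner_summable[OF f d])
  have pt: "cnj (f x) * d x = complex_of_real (c * (cmod (f x))^2)" if "x \<in> -G" for x
  proof -
    have "cnj (f x) * d x = complex_of_real c * (cnj (f x) * f x)"
      using off[OF f, of x] that by (simp add: d_def)
    also have "\<dots> = complex_of_real (c * (cmod (f x))^2)" by (simp add: cnj_self)
    finally show ?thesis .
  qed
  have im: "Im (infsum (\<lambda>x. cnj (f x) * d x) (-G)) = 0"
  proof -
    have "Im (infsum (\<lambda>x. cnj (f x) * d x) (-G)) = infsum (\<lambda>x. Im (cnj (f x) * d x)) (-G)"
      by (rule infsum_Im[OF sm, symmetric])
    also have "\<dots> = infsum (\<lambda>x. 0) (-G)" by (rule infsum_cong) (simp add: pt)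
    finally show ?thesis by simp
  qed
  have re: "Re (infsum (\<lambda>x. cnj (f x) * d x) (-G)) \<ge> 0"
  proof -
    have "Re (infsum (\<lambda>x. cnj (f x) * d x) (-G)) = infsum (\<lambda>x. Re (cnj (f x) * d x)) (-G)"
      by (rule infsum_Re[OF sm, symmetric])
    also have "\<dots> \<ge> 0" by (rule infsum_nonneg) (simp add: pt c)
    finally show ?thesis .
  qed
  have fi: "Im (\<Sum>x\<in>G. cnj (f x) * d x) = 0 \<and> Re (\<Sum>x\<in>G. cnj (f x) * d x) \<ge> 0"
    using fin[OF f] by (simp add: d_def)
  show "Im (l2inner f (\<lambda>x. T f x - S f x)) = 0 \<and> Re (l2inner f (\<lambda>x. T f x - S f x)) \<ge> 0"
    using eq im re fi by (simp add: d_def[symmetric])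
qed

locale farseq =
  fixes p :: "nat \<Rightarrow> 'a::metric_space"
  assumes far: "\<And>m k. k < m \<Longrightarrow> dist (p m) (p k) > real m"
begin

lemma p_eq [simp]: "p m = p k \<longleftrightarrow> m = k"
proof
  assume e: "p m = p k"
  show "m = k"
  proof (rule ccontr)
    assume "m \<noteq> k"
    then have "k < m \<or> m < k" by arith
    then show False
    proof
      assume "k < m" then have "dist (p m) (p k) > real m" by (rule far)
      with e show False by simp
    next
      assume "m < k" then have "dist (p k) (p m) > real k" by (rule far)
      with e show False by simp
    qed
  qed
qed simp

definition xs :: "nat \<Rightarrow> 'a" where "xs n = p (2*n)"
definition ys :: "nat \<Rightarrow> 'a" where "ys n = p (2*n+1)"

lemma xs_eq [simp]: "xs n = xs m \<longleftrightarrow> n = m" by (simp add: xs_def)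
lemma ys_eq [simp]: "ys n = ys m \<longleftrightarrow> n = m" by (simp add: ys_def)
lemma xs_ys [simp]: "xs n \<noteq> ys m" unfolding xs_def ys_def p_eq by presburger
lemma ys_xs [simp]: "ys m \<noteq> xs n" using xs_ys[of n m] by metis

lemma far_xy: "dist (xs n) (ys n) > real (2*n+1)"
  using far[of "2*n" "2*n+1"] by (simp add: xs_def ys_def dist_commute)

lemma pt_cases:
  obtains m where "x = xs m" | m where "x = ys m" | "\<forall>m. x \<noteq> xs m \<and> x \<noteq> ys m"
  by blast

definition Qop :: "nat \<Rightarrow> 'a op" where
  "Qop N f x = (\<Sum>n<N. if x = xs n \<or> x = ys n then (f (xs n) + f (ys n)) / 2 else 0)"

definition Uop :: "nat \<Rightarrow> 'a op" where
  "Uop k f x = (if x = xs k \<or> x = ys k then (f (xs k) + f (ys k)) / 2 else f x)"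

definition GS :: "nat \<Rightarrow> 'a set" where "GS M = xs ` {..<M} \<union> ys ` {..<M}"

lemma Q_xs [simp]: "Qop N f (xs m) = (if m < N then (f (xs m) + f (ys m)) / 2 else 0)"
  unfolding Qop_def by simp

lemma Q_ys [simp]: "Qop N f (ys m) = (if m < N then (f (xs m) + f (ys m)) / 2 else 0)"
  unfolding Qop_def by simp

lemma Q_none: "\<forall>m. x \<noteq> xs m \<and> x \<noteq> ys m \<Longrightarrow> Qop N f x = 0"
  unfolding Qop_def by simp

lemma notGS: "x \<notin> GS M \<longleftrightarrow> (\<forall>n<M. x \<noteq> xs n \<and> x \<noteq> ys n)"
  unfolding GS_def by auto

lemma Q_out: "x \<notin> GS N \<Longrightarrow> Qop N f x = 0"
  unfolding Qop_def notGS by (intro sum.neutral) auto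

lemma U_xs [simp]: "Uop k f (xs m) = (if m = k then (f (xs k) + f (ys k)) / 2 else f (xs m))"
  unfolding Uop_def by auto

lemma U_ys [simp]: "Uop k f (ys m) = (if m = k then (f (xs k) + f (ys k)) / 2 else f (ys m))"
  unfolding Uop_def by auto

lemma U_other: "x \<noteq> xs k \<Longrightarrow> x \<noteq> ys k \<Longrightarrow> Uop k f x = f x"
  unfolding Uop_def by auto

lemma finite_GS [simp]: "finite (GS M)" unfolding GS_def by simp

lemma sum_GS: "(\<Sum>x\<in>GS M. \<phi> x) = (\<Sum>n<M. \<phi> (xs n) + \<phi> (ys n))"
proof -
  have "(\<Sum>x\<in>GS M. \<phi> x) = (\<Sum>x\<in>xs ` {..<M}. \<phi> x) + (\<Sum>x\<in>ys ` {..<M}. \<phi> x)"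
    unfolding GS_def by (rule sum.union_disjoint) auto
  also have "(\<Sum>x\<in>xs ` {..<M}. \<phi> x) = (\<Sum>n<M. \<phi> (xs n))"
    by (subst sum.reindex) (auto simp: inj_on_def)
  also have "(\<Sum>x\<in>ys ` {..<M}. \<phi> x) = (\<Sum>n<M. \<phi> (ys n))"
    by (subst sum.reindex) (auto simp: inj_on_def)
  finally show ?thesis by (simp add: sum.distrib)
qed

lemma GS_mono: "N \<le> M \<Longrightarrow> GS N \<subseteq> GS M"
  unfolding GS_def by auto

end

context farseq begin

lemma Q_lin: "Qop N (\<lambda>x. a * f x + b * g x) = (\<lambda>x. a * Qop N f x + b * Qop N g x)"
proof
  fix x show "Qop N (\<lambda>x. a * f x + b * g x) x = a * Qop N f x + b * Qop N g x"
  proof (cases x rule: pt_cases)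
    case (1 m) then show ?thesis by (cases "m < N") (simp_all add: field_simps)
  next
    case (2 m) then show ?thesis by (cases "m < N") (simp_all add: field_simps)
  next
    case 3 then show ?thesis by (simp add: Q_none)
  qed
qed

lemma U_lin: "Uop k (\<lambda>x. a * f x + b * g x) = (\<lambda>x. a * Uop k f x + b * Uop k g x)"
  unfolding Uop_def by (auto simp: field_simps)

lemma Q_norm: assumes f: "f \<in> ell2" shows "Qop N f \<in> ell2" "l2norm (Qop N f) \<le> l2norm f"
proof -
  have off: "cmod (Qop N f x) \<le> cmod (f x)" if "x \<notin> GS N" for x using Q_out[OF that] by simp
  have s: "(\<Sum>x\<in>GS N. (cmod (Qop N f x))^2) \<le> (\<Sum>x\<in>GS N. (cmod (f x))^2)"
    unfolding sum_GS by (rule sum_mono) (use half_sq in simp)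
  show "Qop N f \<in> ell2" "l2norm (Qop N f) \<le> l2norm f"
    using compare_norm[OF f finite_GS off s] by auto
qed

lemma U_norm: assumes f: "f \<in> ell2" shows "Uop k f \<in> ell2" "l2norm (Uop k f) \<le> l2norm f"
proof -
  have off: "cmod (Uop k f x) \<le> cmod (f x)" if "x \<notin> {xs k, ys k}" for x using U_other that by simp
  have s: "(\<Sum>x\<in>{xs k, ys k}. (cmod (Uop k f x))^2) \<le> (\<Sum>x\<in>{xs k, ys k}. (cmod (f x))^2)"
    using half_sq[of "f (xs k)" "f (ys k)"] by simp
  show "Uop k f \<in> ell2" "l2norm (Uop k f) \<le> l2norm f"
    using compare_norm[OF f _ off s] by auto
qed

lemma Q_bo: "bounded_op (Qop N)"
  unfolding bounded_op_def using Q_norm Q_lin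
  by (metis (no_types, lifting) mult_1)

lemma U_bo: "bounded_op (Uop k)"
  unfolding bounded_op_def using U_norm U_lin
  by (metis (no_types, lifting) mult_1)

lemma pair_sym: "cnj ((a + b) / 2) * c + cnj ((a + b) / 2) * d = cnj a * ((c + d) / 2) + cnj b * ((c + d) / 2)"
  by (simp add: field_simps)

lemma Q_sa: "self_adjoint_op (Qop N)"
  unfolding self_adjoint_op_def
proof (intro conjI Q_bo ballI)
  fix f g :: "'a vec" assume f: "f \<in> ell2" and g: "g \<in> ell2"
  have "l2inner (Qop N f) g = (\<Sum>x\<in>GS N. cnj (Qop N f x) * g x)"
    by (rule l2inner_fin) (auto simp: Q_out)
  also have "\<dots> = (\<Sum>x\<in>GS N. cnj (f x) * Qop N g x)"
    unfolding sum_GS by (rule sum.cong) (auto simp: field_simps)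
  also have "\<dots> = l2inner f (Qop N g)"
    by (rule l2inner_fin_right[symmetric]) (auto simp: Q_out)
  finally show "l2inner (Qop N f) g = l2inner f (Qop N g)" .
qed

lemma U_sa: "self_adjoint_op (Uop k)"
  unfolding self_adjoint_op_def
proof (intro conjI U_bo ballI)
  fix f g :: "'a vec" assume f: "f \<in> ell2" and g: "g \<in> ell2"
  have Uf: "Uop k f \<in> ell2" and Ug: "Uop k g \<in> ell2" using U_norm f g by auto
  have "l2inner (Uop k f) g = (\<Sum>x\<in>{xs k, ys k}. cnj (Uop k f x) * g x) + infsum (\<lambda>x. cnj (Uop k f x) * g x) (-{xs k, ys k})"
    by (rule l2inner_split[OF Uf g]) simp
  also have "(\<Sum>x\<in>{xs k, ys k}. cnj (Uop k f x) * g x) = (\<Sum>x\<in>{xs k, ys k}. cnj (f x) * Uop k g x)"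
    using pair_sym[of "f (xs k)" "f (ys k)" "g (xs k)" "g (ys k)"] by simp
  also have "infsum (\<lambda>x. cnj (Uop k f x) * g x) (-{xs k, ys k}) = infsum (\<lambda>x. cnj (f x) * Uop k g x) (-{xs k, ys k})"
    by (rule infsum_cong) (simp add: U_other)
  also have "(\<Sum>x\<in>{xs k, ys k}. cnj (f x) * Uop k g x) + infsum (\<lambda>x. cnj (f x) * Uop k g x) (-{xs k, ys k})
     = l2inner f (Uop k g)"
    by (rule l2inner_split[OF f Ug, symmetric]) simp
  finally show "l2inner (Uop k f) g = l2inner f (Uop k g)" .
qed

lemma Q_prop: "propagation_le (1 + (\<Sum>n<N. dist (xs n) (ys n))) (Qop N)"
  unfolding propagation_le_def
proof (intro allI impI)
  fix x y :: 'a assume d: "1 + (\<Sum>n<N. dist (xs n) (ys n)) \<le> dist x y"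
  have bnd: "dist (xs m) (ys m) < 1 + (\<Sum>n<N. dist (xs n) (ys n))" if "m < N" for m
  proof -
    have "dist (xs m) (ys m) \<le> (\<Sum>n<N. dist (xs n) (ys n))"
      by (rule member_le_sum) (use that in auto)
    then show ?thesis by simp
  qed
  have pos: "0 < 1 + (\<Sum>n<N. dist (xs n) (ys n))" by (simp add: sum_nonneg add_pos_nonneg)
  have "Qop N (delta y) x = 0"
  proof (cases x rule: pt_cases)
    case (1 m)
    show ?thesis
    proof (cases "m < N \<and> (y = xs m \<or> y = ys m)")
      case True
      then have "dist x y < 1 + (\<Sum>n<N. dist (xs n) (ys n))"
        using 1 bnd pos by (auto simp: dist_commute)
      with d show ?thesis by linarith
    next
      case False then show ?thesis using 1 by (auto simp: delta_def)
    qed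
  next
    case (2 m)
    show ?thesis
    proof (cases "m < N \<and> (y = xs m \<or> y = ys m)")
      case True
      then have "dist x y < 1 + (\<Sum>n<N. dist (xs n) (ys n))"
        using 2 bnd pos by (auto simp: dist_commute)
      with d show ?thesis by linarith
    next
      case False then show ?thesis using 2 by (auto simp: delta_def)
    qed
  next
    case 3 then show ?thesis by (simp add: Q_none)
  qed
  then show "l2inner (delta x) (Qop N (delta y)) = 0" by (simp add: l2inner_delta)
qed

lemma U_prop: "propagation_le (1 + dist (xs k) (ys k)) (Uop k)"
  unfolding propagation_le_def
proof (intro allI impI)
  fix x y :: 'a assume d: "1 + dist (xs k) (ys k) \<le> dist x y"
  have "Uop k (delta y) x = 0"
  proof (cases "x = xs k \<or> x = ys k")
    case True
    show ?thesis
    proof (cases "y = xs k \<or> y = ys k")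
      case True
      with \<open>x = xs k \<or> x = ys k\<close> have "dist x y \<le> dist (xs k) (ys k)" by (auto simp: dist_commute)
      with d show ?thesis by linarith
    next
      case False then show ?thesis using \<open>x = xs k \<or> x = ys k\<close> by (auto simp: delta_def)
    qed
  next
    case False
    then have "Uop k (delta y) x = delta y x" by (simp add: U_other)
    moreover have "x \<noteq> y"
    proof
      assume "x = y"
      with d have "1 + dist (xs k) (ys k) \<le> 0" by simp
      moreover have "0 \<le> dist (xs k) (ys k)" by simp
      ultimately show False by linarith
    qed
    ultimately show ?thesis by (simp add: delta_def)
  qed
  then show "l2inner (delta x) (Uop k (delta y)) = 0" by (simp add: l2inner_delta)
qed

lemma Q_roe: "Qop N \<in> uniform_roe" by (rule roe_of_prop[OF Q_bo Q_prop])
lemma U_roe: "Uop k \<in> uniform_roe" by (rule roe_of_prop[OF U_bo U_prop])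

lemma Q_mono: assumes "N \<le> M" shows "op_le (Qop N) (Qop M)"
proof (rule op_le_fin[OF Q_bo Q_bo finite_GS[of M] order_refl])
  fix f :: "'a vec" and x assume "f \<in> ell2" "x \<notin> GS M"
  then have "x \<notin> GS N" using GS_mono[OF assms] by auto
  then show "Qop M f x - Qop N f x = complex_of_real 0 * f x" using \<open>x \<notin> GS M\<close> by (simp add: Q_out)
next
  fix f :: "'a vec" assume "f \<in> ell2"
  show "Im (\<Sum>x\<in>GS M. cnj (f x) * (Qop M f x - Qop N f x)) = 0 \<and>
        Re (\<Sum>x\<in>GS M. cnj (f x) * (Qop M f x - Qop N f x)) \<ge> 0"
    unfolding sum_GS
  proof (rule sum_real_nonneg)
    fix n assume n: "n \<in> {..<M}"
    show "Im (cnj (f (xs n)) * (Qop M f (xs n) - Qop N f (xs n)) + cnj (f (ys n)) * (Qop M f (ys n) - Qop N f (ys n))) = 0 \<and>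
          Re (cnj (f (xs n)) * (Qop M f (xs n) - Qop N f (xs n)) + cnj (f (ys n)) * (Qop M f (ys n) - Qop N f (ys n))) \<ge> 0"
      using n pair_pos1[of "f (xs n)" "f (ys n)"] by (cases "n < N") simp_all
  qed
qed

lemma Q_le_U: "op_le (Qop N) (Uop k)"
proof (rule op_le_fin[OF Q_bo U_bo finite_GS[of "N + Suc k"], of 1])
  fix f :: "'a vec" and x assume "f \<in> ell2" "x \<notin> GS (N + Suc k)"
  then have "x \<notin> GS N" "x \<noteq> xs k" "x \<noteq> ys k" using GS_mono[of N "N + Suc k"] unfolding notGS by auto
  then show "Uop k f x - Qop N f x = complex_of_real 1 * f x" by (simp add: Q_out U_other)
next
  fix f :: "'a vec" assume "f \<in> ell2"
  show "Im (\<Sum>x\<in>GS (N + Suc k). cnj (f x) * (Uop k f x - Qop N f x)) = 0 \<and>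
        Re (\<Sum>x\<in>GS (N + Suc k). cnj (f x) * (Uop k f x - Qop N f x)) \<ge> 0"
    unfolding sum_GS
  proof (rule sum_real_nonneg)
    fix n assume n: "n \<in> {..<N + Suc k}"
    show "Im (cnj (f (xs n)) * (Uop k f (xs n) - Qop N f (xs n)) + cnj (f (ys n)) * (Uop k f (ys n) - Qop N f (ys n))) = 0 \<and>
          Re (cnj (f (xs n)) * (Uop k f (xs n) - Qop N f (xs n)) + cnj (f (ys n)) * (Uop k f (ys n) - Qop N f (ys n))) \<ge> 0"
    proof (cases "n = k")
      case True then show ?thesis using pair_pos1[of "f (xs n)" "f (ys n)"] by (cases "n < N") simp_all
    next
      case False then show ?thesis
        using pair_pos2[of "f (xs n)" "f (ys n)"] pair_pos3[of "f (xs n)" "f (ys n)"] by (cases "n < N") simp_all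
    qed
  qed
qed simp

end

context farseq begin

lemma half_entry:
  assumes L: "self_adjoint_op L" and LQ: "op_le (Qop (Suc k)) L" and LU: "op_le L (Uop k)"
  shows "L (delta (ys k)) (xs k) = 1/2"
proof -
  have Lbo: "bounded_op L" using L unfolding self_adjoint_op_def by blast
  define Q where "Q = Qop (Suc k)"
  have key: "L (lc (delta (xs k)) (delta (ys k)) s) (xs k) = (1 + s) / 2" for s
  proof -
    define h where "h = lc (delta (xs k)) (delta (ys k)) s"
    have h: "h \<in> ell2" unfolding h_def by (rule lc_ell2[OF delta_ell2 delta_ell2])
    have hout: "h x = 0" if "x \<notin> {xs k, ys k}" for x using that by (simp add: h_def lc_def delta_def)
    have UQ: "Uop k h x = Q h x" for x
    proof (cases x rule: pt_cases)
      case (1 m) then show ?thesis by (cases "m = k") (auto simp: h_def lc_def delta_def Q_def)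
    next
      case (2 m) then show ?thesis by (cases "m = k") (auto simp: h_def lc_def delta_def Q_def)
    next
      case 3 then show ?thesis by (simp add: Q_def Q_none U_other h_def lc_def delta_def)
    qed
    define X where "X = l2inner h (\<lambda>x. L h x - Q h x)"
    define Y where "Y = l2inner h (\<lambda>x. Uop k h x - L h x)"
    have Xs: "X = (\<Sum>x\<in>{xs k, ys k}. cnj (h x) * (L h x - Q h x))"
      unfolding X_def by (rule l2inner_fin) (use hout in auto)
    have Ys: "Y = (\<Sum>x\<in>{xs k, ys k}. cnj (h x) * (Uop k h x - L h x))"
      unfolding Y_def by (rule l2inner_fin) (use hout in auto)
    have XY: "X + Y = 0" unfolding Xs Ys by (simp add: UQ algebra_simps)
    have X1: "Im X = 0 \<and> Re X \<ge> 0" using LQ h unfolding op_le_def X_def Q_def by blast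
    have Y1: "Re Y \<ge> 0" using LU h unfolding op_le_def Y_def by blast
    have "Re X + Re Y = 0" using XY by (simp add: complex_eq_iff)
    then have "Re X = 0" using X1 Y1 by linarith
    with X1 have X0: "X = 0" by (simp add: complex_eq_iff)
    have ker: "l2inner (delta (xs k)) (\<lambda>x. L h x - Q h x) = 0"
      by (rule pos_kernel[OF Q_bo[of "Suc k", folded Q_def] Lbo LQ[folded Q_def] h delta_ell2]) (use X0 X_def in simp)
    then have "L h (xs k) = Q h (xs k)" by (simp add: l2inner_delta)
    also have "Q h (xs k) = (1 + s) / 2" by (simp add: Q_def h_def lc_def delta_def)
    finally show ?thesis by (simp add: h_def)
  qed
  have Llc: "L (lc (delta (xs k)) (delta (ys k)) s) = lc (L (delta (xs k))) (L (delta (ys k))) s" for s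
    by (rule bop_lc[OF Lbo delta_ell2 delta_ell2])
  have e1: "L (delta (xs k)) (xs k) + L (delta (ys k)) (xs k) = 1"
    using key[of 1] unfolding Llc by (simp add: lc_def)
  have e2: "L (delta (xs k)) (xs k) - L (delta (ys k)) (xs k) = 0"
    using key[of "-1"] unfolding Llc by (simp add: lc_def)
  from e2 have "L (delta (xs k)) (xs k) = L (delta (ys k)) (xs k)" by simp
  with e1 have "2 * L (delta (ys k)) (xs k) = 1" by simp
  then show ?thesis by (simp add: field_simps)
qed

lemma not_mc: "\<not> monotone_complete (uniform_roe :: 'a op set)"
proof
  assume mc: "monotone_complete (uniform_roe :: 'a op set)"
  define idx :: "nat \<Rightarrow> 'a op" where "idx n = (\<lambda>f x. of_nat n)" for n
  have inj: "inj idx"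
  proof (rule injI)
    fix m n assume "idx m = idx n"
    then have "idx m (\<lambda>_. 0) undefined = idx n (\<lambda>_. 0) undefined" by simp
    then have "(of_nat m :: complex) = of_nat n" unfolding idx_def by simp
    then show "m = n" by simp
  qed
  have iv: "inv idx (idx n) = n" for n by (rule inv_f_f[OF inj])
  define D where "D = range idx"
  define le where "le i j = (inv idx i \<le> inv idx j)" for i j
  define N where "N i = Qop (inv idx i)" for i
  have p1: "D \<noteq> {}" unfolding D_def by simp
  have p2: "\<forall>i\<in>D. le i i" unfolding le_def by simp
  have p3: "\<forall>i\<in>D. \<forall>j\<in>D. \<forall>k\<in>D. le i j \<and> le j k \<longrightarrow> le i k" unfolding le_def by auto
  have p4: "\<forall>i\<in>D. \<forall>j\<in>D. \<exists>k\<in>D. le i k \<and> le j k"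
  proof (intro ballI)
    fix i j assume "i \<in> D" "j \<in> D"
    show "\<exists>k\<in>D. le i k \<and> le j k"
      by (rule bexI[of _ "idx (max (inv idx i) (inv idx j))"]) (auto simp: le_def iv D_def)
  qed
  have p5: "\<forall>i\<in>D. N i \<in> uniform_roe \<and> self_adjoint_op (N i)" unfolding N_def by (simp add: Q_roe Q_sa)
  have p6: "\<forall>i\<in>D. \<forall>j\<in>D. le i j \<longrightarrow> op_le (N i) (N j)" unfolding N_def le_def by (simp add: Q_mono)
  have p7: "\<exists>C. \<forall>i\<in>D. \<forall>f\<in>ell2. l2norm (N i f) \<le> C * l2norm f"
    by (rule exI[of _ 1]) (simp add: N_def Q_norm)
  have inst: "D \<noteq> {} \<and>
      (\<forall>i\<in>D. le i i) \<and>
      (\<forall>i\<in>D. \<forall>j\<in>D. \<forall>k\<in>D. le i j \<and> le j k \<longrightarrow> le i k) \<and>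
      (\<forall>i\<in>D. \<forall>j\<in>D. \<exists>k\<in>D. le i k \<and> le j k) \<and>
      (\<forall>i\<in>D. N i \<in> uniform_roe \<and> self_adjoint_op (N i)) \<and>
      (\<forall>i\<in>D. \<forall>j\<in>D. le i j \<longrightarrow> op_le (N i) (N j)) \<and>
      (\<exists>C. \<forall>i\<in>D. \<forall>f\<in>ell2. l2norm (N i f) \<le> C * l2norm f)
      \<longrightarrow>
      (\<exists>S\<in>uniform_roe. self_adjoint_op S \<and> (\<forall>i\<in>D. op_le (N i) S) \<and>
         (\<forall>U\<in>uniform_roe. self_adjoint_op U \<and> (\<forall>i\<in>D. op_le (N i) U) \<longrightarrow> op_le S U))"
    by (insert mc[unfolded monotone_complete_def], drule spec[of _ D], drule spec[of _ le], drule spec[of _ N], assumption)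
  have "\<exists>S\<in>uniform_roe. self_adjoint_op S \<and> (\<forall>i\<in>D. op_le (N i) S) \<and>
         (\<forall>U\<in>uniform_roe. self_adjoint_op U \<and> (\<forall>i\<in>D. op_le (N i) U) \<longrightarrow> op_le S U)"
    by (rule mp[OF inst]) (intro conjI p1 p2 p3 p4 p5 p6 p7)
  then obtain L where L1: "L \<in> uniform_roe" and L2: "self_adjoint_op L" and L3: "\<forall>i\<in>D. op_le (N i) L"
      and L4: "\<forall>U\<in>uniform_roe. self_adjoint_op U \<and> (\<forall>i\<in>D. op_le (N i) U) \<longrightarrow> op_le L U"
    by blast
  have LQ: "op_le (Qop n) L" for n using L3 unfolding D_def N_def by (simp add: iv)
  have LU: "op_le L (Uop k)" for k
  proof -
    have "\<forall>i\<in>D. op_le (N i) (Uop k)" unfolding D_def N_def by (simp add: Q_le_U)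
    then show ?thesis using L4 U_roe U_sa by blast
  qed
  have half: "L (delta (ys k)) (xs k) = 1/2" for k by (rule half_entry[OF L2 LQ LU])
  have Lbo: "bounded_op L" using L2 unfolding self_adjoint_op_def by blast
  obtain S where S1: "finite_propagation S" and S2: "\<forall>f\<in>ell2. l2norm (\<lambda>x. L f x - S f x) \<le> 1/4 * l2norm f"
  proof -
    have "\<forall>\<epsilon>>0. \<exists>S. finite_propagation S \<and> (\<forall>f\<in>ell2. l2norm (\<lambda>x. L f x - S f x) \<le> \<epsilon> * l2norm f)"
      using L1 unfolding uniform_roe_def by blast
    then have "\<exists>S. finite_propagation S \<and> (\<forall>f\<in>ell2. l2norm (\<lambda>x. L f x - S f x) \<le> 1/4 * l2norm f)"
      by (drule_tac spec[of _ "1/4"]) simp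
    then show ?thesis using that by blast
  qed
  obtain R where R: "propagation_le R S" and Sbo: "bounded_op S" using S1 unfolding finite_propagation_def by blast
  obtain n :: nat where n: "R \<le> real n" using real_arch_simple by blast
  have "dist (xs n) (ys n) \<ge> R" using far_xy[of n] n by simp
  then have "l2inner (delta (xs n)) (S (delta (ys n))) = 0" using R unfolding propagation_le_def by blast
  then have S0: "S (delta (ys n)) (xs n) = 0" by (simp add: l2inner_delta)
  have Ld: "L (delta (ys n)) \<in> ell2" by (rule bop_ell2[OF Lbo delta_ell2])
  have Sd: "S (delta (ys n)) \<in> ell2" by (rule bop_ell2[OF Sbo delta_ell2])
  have dd: "(\<lambda>x. L (delta (ys n)) x - S (delta (ys n)) x) \<in> ell2"
    by (rule ell2_diff[OF Ld Sd])
  have "cmod (L (delta (ys n)) (xs n) - S (delta (ys n)) (xs n)) \<le> l2norm (\<lambda>x. L (delta (ys n)) x - S (delta (ys n)) x)"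
    by (rule point_le_l2norm[OF dd])
  also have "\<dots> \<le> 1/4 * l2norm (delta (ys n))" by (rule S2[rule_format, OF delta_ell2])
  also have "\<dots> = 1/4" by (simp add: l2norm_delta)
  finally have "cmod (1/2 :: complex) \<le> 1/4" using half[of n] S0 by simp
  then show False by simp
qed

end

primrec stp :: "('a::metric_space) \<Rightarrow> (real \<Rightarrow> 'a) \<Rightarrow> nat \<Rightarrow> real" where
  "stp a pk 0 = 0"
| "stp a pk (Suc m) = stp a pk m + dist a (pk (stp a pk m + real m))"

lemma exists_farseq:
  assumes "\<not> bounded (UNIV :: 'a::metric_space set)"
  shows "\<exists>p :: nat \<Rightarrow> 'a. farseq p"
proof -
  obtain a :: 'a where True by blast
  have far: "\<exists>z. dist a z > R" for R
    using assms unfolding bounded_any_center[of _ a] by (auto simp: not_le)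
  define pk where "pk R = (SOME z. dist a z > R)" for R
  have pk: "dist a (pk R) > R" for R unfolding pk_def by (rule someI_ex[OF far])
  define p where "p m = pk (stp a pk m + real m)" for m
  have step: "stp a pk m \<le> stp a pk (Suc m)" for m by simp
  have mono: "k \<le> m \<Longrightarrow> stp a pk k \<le> stp a pk m" for k m by (rule lift_Suc_mono_le[of "stp a pk", OF step])
  have nn: "stp a pk m \<ge> 0" for m using mono[of 0 m] by simp
  have bd: "dist a (p k) \<le> stp a pk m" if "k < m" for k m
  proof -
    have "dist a (p k) \<le> stp a pk (Suc k)" using nn[of k] by (simp add: p_def)
    also have "\<dots> \<le> stp a pk m" by (rule mono) (use that in simp)
    finally show ?thesis .
  qed
  have "farseq p"
  proof
    fix m k :: nat assume km: "k < m"
    have "dist a (p m) > stp a pk m + real m" unfolding p_def by (rule pk)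
    moreover have "dist a (p m) \<le> dist a (p k) + dist (p k) (p m)" by (rule dist_triangle)
    moreover have "dist a (p k) \<le> stp a pk m" by (rule bd[OF km])
    ultimately show "dist (p m) (p k) > real m" by (simp add: dist_commute)
  qed
  then show ?thesis by blast
qed

lemma bounded_dir:
  assumes "bounded (UNIV :: 'a::metric_space set)"
  shows "monotone_complete (uniform_roe :: 'a op set)"
proof -
  obtain e where e: "\<forall>x\<in>UNIV. \<forall>y\<in>UNIV. dist (x::'a) y \<le> e" using assms unfolding bounded_two_points by blast
  have roe: "T \<in> uniform_roe" if "bounded_op T" for T :: "'a op"
  proof (rule roe_of_prop[OF that, of "e + 1"])
    show "propagation_le (e + 1) T" unfolding propagation_le_def
    proof (intro allI impI)
      fix x y :: 'a assume "e + 1 \<le> dist x y"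
      moreover have "dist x y \<le> e" using e by blast
      ultimately show "l2inner (delta x) (T (delta y)) = 0" by linarith
    qed
  qed
  show ?thesis unfolding monotone_complete_def
  proof (intro allI impI)
    fix D :: "'a op set" and le :: "'a op \<Rightarrow> 'a op \<Rightarrow> bool" and N :: "'a op \<Rightarrow> 'a op"
    assume H: "D \<noteq> {} \<and>
      (\<forall>i\<in>D. le i i) \<and>
      (\<forall>i\<in>D. \<forall>j\<in>D. \<forall>k\<in>D. le i j \<and> le j k \<longrightarrow> le i k) \<and>
      (\<forall>i\<in>D. \<forall>j\<in>D. \<exists>k\<in>D. le i k \<and> le j k) \<and>
      (\<forall>i\<in>D. N i \<in> uniform_roe \<and> self_adjoint_op (N i)) \<and>
      (\<forall>i\<in>D. \<forall>j\<in>D. le i j \<longrightarrow> op_le (N i) (N j)) \<and>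
      (\<exists>C. \<forall>i\<in>D. \<forall>f\<in>ell2. l2norm (N i f) \<le> C * l2norm f)"
    have h1: "D \<noteq> {}" using H by (rule conjunct1)
    have h2: "\<forall>i\<in>D. le i i" using H[THEN conjunct2] by (rule conjunct1)
    have h3: "\<forall>i\<in>D. \<forall>j\<in>D. \<forall>k\<in>D. le i j \<and> le j k \<longrightarrow> le i k"
      using H[THEN conjunct2, THEN conjunct2] by (rule conjunct1)
    have h4: "\<forall>i\<in>D. \<forall>j\<in>D. \<exists>k\<in>D. le i k \<and> le j k"
      using H[THEN conjunct2, THEN conjunct2, THEN conjunct2] by (rule conjunct1)
    have h5: "\<forall>i\<in>D. N i \<in> uniform_roe \<and> self_adjoint_op (N i)"
      using H[THEN conjunct2, THEN conjunct2, THEN conjunct2, THEN conjunct2] by (rule conjunct1)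
    have h6: "\<forall>i\<in>D. \<forall>j\<in>D. le i j \<longrightarrow> op_le (N i) (N j)"
      using H[THEN conjunct2, THEN conjunct2, THEN conjunct2, THEN conjunct2, THEN conjunct2] by (rule conjunct1)
    have h7: "\<exists>C. \<forall>i\<in>D. \<forall>f\<in>ell2. l2norm (N i f) \<le> C * l2norm f"
      using H[THEN conjunct2, THEN conjunct2, THEN conjunct2, THEN conjunct2, THEN conjunct2] by (rule conjunct2)
    then obtain C where C: "\<forall>i\<in>D. \<forall>f\<in>ell2. l2norm (N i f) \<le> C * l2norm f" by (rule exE)
    have sa: "\<forall>i\<in>D. self_adjoint_op (N i)" using h5 by blast
    obtain S where S: "bounded_op S" "self_adjoint_op S" "\<forall>i\<in>D. op_le (N i) S"
      "\<forall>U. self_adjoint_op U \<and> (\<forall>i\<in>D. op_le (N i) U) \<longrightarrow> op_le S U"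
      using mono_lub[OF h1 h2 h3 h4 sa h6 C] by blast
    show "\<exists>S\<in>uniform_roe. self_adjoint_op S \<and> (\<forall>i\<in>D. op_le (N i) S) \<and>
         (\<forall>U\<in>uniform_roe. self_adjoint_op U \<and> (\<forall>i\<in>D. op_le (N i) U) \<longrightarrow> op_le S U)"
      using S roe[OF S(1)] by blast
  qed
qed

theorem mainTheorem2:
  assumes discrete: "\<forall>x::'a::{metric_space,countable}. open {x}"
  shows "bounded (UNIV :: 'a set) \<longleftrightarrow> monotone_complete (uniform_roe :: 'a op set)"
proof
  assume "bounded (UNIV :: 'a set)"
  then show "monotone_complete (uniform_roe :: 'a op set)" by (rule bounded_dir)
next
  assume mc: "monotone_complete (uniform_roe :: 'a op set)"
  show "bounded (UNIV :: 'a set)"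
  proof (rule ccontr)
    assume "\<not> bounded (UNIV :: 'a set)"
    then obtain p :: "nat \<Rightarrow> 'a" where "farseq p" using exists_farseq by blast
    then show False using farseq.not_mc mc by blast
  qed
qed

end
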